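(* Let $(\rho_0,p_0)$ solve the TOV system on $[0,R)$ with regular centre and mass function $m_0$, let $g_0(r)=\frac{m_0+4\pi p_0r^3}{r^2[1-2m_0/r]}$, and assume $1+r g_0(r)>0$ on $[0,R)$. For a real parameter $\delta\rho_c$ define $$\delta m(r)=\frac{4\pi r^3\,\delta\rho_c}{3\,[1+r g_0(r)]^2}\exp\Bigl\{2\int_0^r g_0(s)\,\frac{1-s g_0(s)}{1+s g_0(s)}\,ds\Bigr\},\qquad \delta p(r)=-\frac{\delta m(r)}{4\pi r^3}\,\frac{1+8\pi p_0(r)r^2}{1-2m_0(r)/r}.$$ Set $m=m_0+\delta m$, $\rho=m'/(4\pi r^2)$, $p=p_0+\delta p$. Then on every interval $[0,R')\subseteq[0,R)$ on which $1-2m(r)/r>0$, the pair $(\rho,p)$ solves the TOV system with regular centre, has mass function $m$, satisfies $$\frac{m+4\pi p r^3}{r^2[1-2m/r]}=g_0(r),$$ and has central density $\rho_0(0)+\delta\rho_c$ and central pressure $p_0(0)+\delta p_c$ with $\delta p_c=-\delta\rho_c/3$. Explicitly $$\delta p(r)=\frac{\delta p_c}{[1+rg_0]^2}\,\frac{1+8\pi p_0r^2}{1-2m_0/r}\exp\Bigl\{2\int_0^r g_0\frac{1-sg_0}{1+sg_0}ds\Bigr\}.$$ Conversely, every solution of the TOV system with regular centre whose function $\frac{m+4\pi pr^3}{r^2[1-2m/r]}$ equals $g_0$ is of this form. *)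

theory Defs
  imports "HOL-Analysis.Analysis" "HOL-Library.Extended_Real"
begin

definition Icr :: "ereal \<Rightarrow> real set" where
  "Icr R = {r::real. 0 \<le> r \<and> ereal r < R}"

definition mass :: "(real \<Rightarrow> real) \<Rightarrow> real \<Rightarrow> real" where
  "mass \<rho> r = 4 * pi * integral {0..r} (\<lambda>s. s^2 * \<rho> s)"

text \<open>The function (m + 4 pi p r^3) / (r^2 (1 - 2m/r)); at r = 0 Isabelle's
  division convention gives 0, which is its limiting value for a regular centre.\<close>
definition gfun :: "(real \<Rightarrow> real) \<Rightarrow> (real \<Rightarrow> real) \<Rightarrow> real \<Rightarrow> real" where
  "gfun m p r = (m r + 4 * pi * p r * r^3) / (r^2 * (1 - 2 * m r / r))"

text \<open>(rho,p) solves the TOV system on [0,R) with regular centre: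
  rho and p are continuous on [0,R) (finite central values), the mass is
  m(r) = 4 pi int_0^r s^2 rho, 1 - 2m/r > 0 for 0 < r < R and
  p' = -(rho + p)(m + 4 pi p r^3)/(r^2(1-2m/r)) for 0 < r < R.\<close>
definition TOV_regular :: "ereal \<Rightarrow> (real \<Rightarrow> real) \<Rightarrow> (real \<Rightarrow> real) \<Rightarrow> bool" where
  "TOV_regular R \<rho> p \<longleftrightarrow>
     continuous_on (Icr R) \<rho> \<and> continuous_on (Icr R) p \<and>
     (\<forall>r\<in>Icr R. r > 0 \<longrightarrow>
        1 - 2 * mass \<rho> r / r > 0 \<and>
        (p has_real_derivative (- (\<rho> r + p r) * gfun (mass \<rho>) p r)) (at r))"

definition Phi :: "(real \<Rightarrow> real) \<Rightarrow> (real \<Rightarrow> real) \<Rightarrow> real \<Rightarrow> real" where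
  "Phi \<rho>0 p0 r = exp (2 * integral {0..r}
      (\<lambda>s. gfun (mass \<rho>0) p0 s * (1 - s * gfun (mass \<rho>0) p0 s) / (1 + s * gfun (mass \<rho>0) p0 s)))"

definition dm :: "(real \<Rightarrow> real) \<Rightarrow> (real \<Rightarrow> real) \<Rightarrow> real \<Rightarrow> real \<Rightarrow> real" where
  "dm \<rho>0 p0 d\<rho>c r =
     4 * pi * r^3 * d\<rho>c / (3 * (1 + r * gfun (mass \<rho>0) p0 r)^2) * Phi \<rho>0 p0 r"

definition dp :: "(real \<Rightarrow> real) \<Rightarrow> (real \<Rightarrow> real) \<Rightarrow> real \<Rightarrow> real \<Rightarrow> real" where
  "dp \<rho>0 p0 d\<rho>c r =
     (if r = 0 then - d\<rho>c / 3
      else - (dm \<rho>0 p0 d\<rho>c r / (4 * pi * r^3)) * (1 + 8 * pi * p0 r * r^2)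
             / (1 - 2 * mass \<rho>0 r / r))"

definition pert_m :: "(real \<Rightarrow> real) \<Rightarrow> (real \<Rightarrow> real) \<Rightarrow> real \<Rightarrow> real \<Rightarrow> real" where
  "pert_m \<rho>0 p0 d\<rho>c r = mass \<rho>0 r + dm \<rho>0 p0 d\<rho>c r"

definition pert_rho :: "(real \<Rightarrow> real) \<Rightarrow> (real \<Rightarrow> real) \<Rightarrow> real \<Rightarrow> real \<Rightarrow> real" where
  "pert_rho \<rho>0 p0 d\<rho>c r =
     (if r = 0 then \<rho>0 0 + d\<rho>c else deriv (pert_m \<rho>0 p0 d\<rho>c) r / (4 * pi * r^2))"

definition pert_p :: "(real \<Rightarrow> real) \<Rightarrow> (real \<Rightarrow> real) \<Rightarrow> real \<Rightarrow> real \<Rightarrow> real" where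
  "pert_p \<rho>0 p0 d\<rho>c r = p0 r + dp \<rho>0 p0 d\<rho>c r"

end

theory Submission
  imports Defs
begin


definition PP :: "ereal \<Rightarrow> real set" where
  "PP R = {r::real. 0 < r \<and> ereal r < R}"

lemma PP_open: "open (PP R)"
proof (cases R)
  case (real x)
  then have "PP R = {0<..<x}" by (auto simp: PP_def)
  then show ?thesis by simp
next
  case PInf
  then have "PP R = {0<..}" by (auto simp: PP_def)
  then show ?thesis by simp
next
  case MInf
  then have "PP R = {}" by (auto simp: PP_def)
  then show ?thesis by simp
qed

lemma PP_sub: "PP R \<subseteq> Icr R" by (auto simp: PP_def Icr_def)

lemma PP_Icr: "r \<in> Icr R \<Longrightarrow> 0 < r \<Longrightarrow> r \<in> PP R" by (auto simp: PP_def Icr_def)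

lemma Icr_mono: "R' \<le> R \<Longrightarrow> Icr R' \<subseteq> Icr R"
  by (auto simp: Icr_def)

lemma PP_mono: "R' \<le> R \<Longrightarrow> PP R' \<subseteq> PP R"
  by (auto simp: PP_def)

lemma exists_b: assumes "x \<in> Icr R" shows "\<exists>b\<in>PP R. x < b"
proof (cases R)
  case (real y)
  have "(x+y)/2 \<in> PP R" "x < (x+y)/2" using assms real by (auto simp: PP_def Icr_def)
  then show ?thesis by blast
next
  case PInf
  have "x+1 \<in> PP R" "x < x+1" using assms PInf by (auto simp: PP_def Icr_def)
  then show ?thesis by blast
next
  case MInf
  with assms show ?thesis by (auto simp: Icr_def)
qed

lemma Icc_sub: "b \<in> PP R \<Longrightarrow> {0..b} \<subseteq> Icr R"
  apply (auto simp: PP_def Icr_def)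
  by (meson ereal_less_eq(3) order_le_less_trans)

lemma at_eq: assumes "b \<in> PP R" "x < b"
  shows "at x within Icr R = at x within {0..b}"
proof (rule at_within_nhd[of x "{..<b}"])
  show "Icr R \<inter> {..<b} - {x} = {0..b} \<inter> {..<b} - {x}"
    using assms Icc_sub[OF assms(1)] by (auto simp: Icr_def PP_def)
qed (use assms in auto)

lemma CONT:
  assumes "\<And>b. b \<in> PP R \<Longrightarrow> continuous_on {0..b} f"
  shows "continuous_on (Icr R) f"
  unfolding continuous_on_eq_continuous_within
proof
  fix x assume x: "x \<in> Icr R"
  obtain b where b: "b \<in> PP R" "x < b" using exists_b[OF x] by blast
  have "x \<in> {0..b}" using x b by (auto simp: Icr_def)
  then have "continuous (at x within {0..b}) f"
    using assms[OF b(1)] continuous_on_eq_continuous_within by blast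
  then show "continuous (at x within Icr R) f" using at_eq[OF b] by simp
qed

lemma int_deriv:
  assumes f: "continuous_on (Icr R) f" and r: "r \<in> PP R"
  shows "((\<lambda>x. integral {0..x} f) has_real_derivative f r) (at r)"
proof -
  obtain b where b: "b \<in> PP R" "r < b" using exists_b[OF PP_sub[THEN subsetD, OF r]] by blast
  have c: "continuous_on {0..b} f" using continuous_on_subset[OF f Icc_sub[OF b(1)]] .
  have "r \<in> {0..b}" using r b by (auto simp: PP_def)
  from integral_has_vector_derivative[OF c this]
  have "((\<lambda>u. integral {0..u} f) has_vector_derivative f r) (at r)"
    using at_within_Icc_at[of 0 r b] r b by (simp add: PP_def)
  then show ?thesis by (simp add: has_real_derivative_iff_has_vector_derivative)
qed

lemma int_cont:
  fixes f :: "real \<Rightarrow> real"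
  assumes f: "continuous_on (Icr R) f"
  shows "continuous_on (Icr R) (\<lambda>x. integral {0..x} f)"
proof (rule CONT)
  fix b assume b: "b \<in> PP R"
  have c: "continuous_on {0..b} f" using continuous_on_subset[OF f Icc_sub[OF b]] .
  show "continuous_on {0..b} (\<lambda>x. integral {0..x} f)"
    by (rule indefinite_integral_continuous_1) (rule integrable_continuous_real[OF c])
qed

lemma mass0[simp]: "mass \<rho> 0 = 0" by (simp add: mass_def)

lemma mass_deriv:
  assumes f: "continuous_on (Icr R) \<rho>" and r: "r \<in> PP R"
  shows "(mass \<rho> has_real_derivative 4 * pi * r^2 * \<rho> r) (at r)"
proof -
  have c: "continuous_on (Icr R) (\<lambda>s. s^2 * \<rho> s)" by (intro continuous_intros f)
  have "((\<lambda>x. 4 * pi * integral {0..x} (\<lambda>s. s^2 * \<rho> s)) has_real_derivative 4 * pi * (r^2 * \<rho> r)) (at r)"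
    by (intro DERIV_cmult int_deriv[OF c r])
  then show ?thesis unfolding mass_def[abs_def] by (simp add: mult.assoc)
qed

lemma mass_cont:
  assumes f: "continuous_on (Icr R) \<rho>"
  shows "continuous_on (Icr R) (mass \<rho>)"
proof -
  have c: "continuous_on (Icr R) (\<lambda>s. s^2 * \<rho> s)" by (intro continuous_intros f)
  show ?thesis unfolding mass_def[abs_def] by (intro continuous_intros int_cont c)
qed

lemma const_closure:
  fixes f :: "real \<Rightarrow> real"
  assumes f: "continuous_on (Icr R) f" and eq: "\<And>x. x \<in> PP R \<Longrightarrow> f x = c" and x: "x \<in> Icr R"
  shows "f x = c"
proof (cases "x = 0")
  case False
  then have "0 < x" using x by (auto simp: Icr_def)
  then show ?thesis using eq PP_Icr x by auto
next
  case True
  obtain b where b: "b \<in> PP R" "x < b" using exists_b[OF x] by blast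
  have c: "continuous_on (closure {0<..b}) f" using b continuous_on_subset[OF f Icc_sub[OF b(1)]]
    by (simp add: PP_def)
  have sub: "{0<..b} \<subseteq> PP R" using b by (auto simp: PP_def) (meson ereal_less_eq(3) order_le_less_trans)
  show ?thesis
    by (rule continuous_constant_on_closure[OF c]) (use eq sub True b in \<open>auto simp: PP_def\<close>)
qed


lemma s2_integral: assumes "0 \<le> x" shows "((\<lambda>s::real. s^2) has_integral x^3/3) {0..x}"
proof -
  have "((\<lambda>s::real. s^2) has_integral (x^3/3 - 0^3/3)) {0..x}"
  proof (rule fundamental_theorem_of_calculus[OF assms])
    fix s :: real assume "s \<in> {0..x}"
    show "((\<lambda>s. s^3/3) has_vector_derivative s^2) (at s within {0..x})"
      unfolding has_real_derivative_iff_has_vector_derivative[symmetric]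
      by (rule derivative_eq_intros refl | simp)+
  qed
  then show ?thesis by simp
qed

definition Aext :: "(real \<Rightarrow> real) \<Rightarrow> real \<Rightarrow> real" where
  "Aext \<rho> r = (if r = 0 then 4 * pi * \<rho> 0 / 3 else mass \<rho> r / r^3)"

lemma mass_Aext: "mass \<rho> r = r^3 * Aext \<rho> r"
  by (simp add: Aext_def)

lemma Aext_deriv:
  assumes f: "continuous_on (Icr R) \<rho>" and r: "r \<in> PP R"
  shows "(Aext \<rho> has_real_derivative (4 * pi * \<rho> r - 3 * Aext \<rho> r) / r) (at r)"
proof -
  have r0: "r > 0" using r by (simp add: PP_def)
  have "((\<lambda>x. mass \<rho> x / x^3) has_real_derivative
      (4 * pi * r^2 * \<rho> r * r^3 - mass \<rho> r * (3 * r^2)) / (r^3 * r^3)) (at r)"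
    using r0 by (intro DERIV_divide mass_deriv[OF f r]) (auto intro!: derivative_eq_intros)
  moreover have "(4 * pi * r^2 * \<rho> r * r^3 - mass \<rho> r * (3 * r^2)) / (r^3 * r^3)
      = (4 * pi * \<rho> r - 3 * Aext \<rho> r) / r"
    using r0 by (simp add: Aext_def field_simps power2_eq_square power3_eq_cube)
  ultimately have "((\<lambda>x. mass \<rho> x / x^3) has_real_derivative
      (4 * pi * \<rho> r - 3 * Aext \<rho> r) / r) (at r)" by simp
  then show ?thesis
    by (rule has_field_derivative_transform_within_open[OF _ PP_open r])
       (auto simp: Aext_def PP_def)
qed

lemma Aext_cont0:
  assumes f: "continuous_on {0..b} \<rho>" and b: "0 \<le> b"
  shows "continuous (at 0 within {0..b}) (Aext \<rho>)"
  unfolding continuous_within_eps_delta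
proof (intro allI impI)
  fix e :: real assume e: "e > 0"
  have "continuous (at 0 within {0..b}) \<rho>" using f b continuous_on_eq_continuous_within[of "{0..b}" \<rho>] by auto
  then obtain d where d: "d > 0" "\<And>x'. x' \<in> {0..b} \<Longrightarrow> dist x' 0 < d \<Longrightarrow> dist (\<rho> x') (\<rho> 0) < e/8"
    unfolding continuous_within_eps_delta using e by (metis divide_pos_pos zero_less_numeral)
  show "\<exists>d>0. \<forall>x'\<in>{0..b}. dist x' 0 < d \<longrightarrow> dist (Aext \<rho> x') (Aext \<rho> 0) < e"
  proof (intro exI[of _ d] conjI ballI impI d(1))
    fix x assume x: "x \<in> {0..b}" and dx: "dist x 0 < d"
    show "dist (Aext \<rho> x) (Aext \<rho> 0) < e"
    proof (cases "x = 0")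
      case True then show ?thesis using e by simp
    next
      case False
      then have x0: "x > 0" using x by simp
      have fx: "continuous_on {0..x} \<rho>" using continuous_on_subset[OF f] x by auto
      have i1: "(\<lambda>s. s^2 * \<rho> s) integrable_on {0..x}"
        by (intro integrable_continuous_real continuous_intros fx)
      have i2: "(\<lambda>s. s^2 * (\<rho> s - \<rho> 0)) integrable_on {0..x}"
        by (intro integrable_continuous_real continuous_intros fx)
      have i3: "(\<lambda>s. s^2 * (e/8)) integrable_on {0..x}"
        by (intro integrable_continuous_real continuous_intros)
      have I0: "integral {0..x} (\<lambda>s. s^2 * \<rho> 0) = x^3/3 * \<rho> 0"
        by (intro integral_unique has_integral_mult_left s2_integral) (use x0 in simp)
      have Ie: "integral {0..x} (\<lambda>s. s^2 * (e/8)) = x^3/3 * (e/8)"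
        by (intro integral_unique has_integral_mult_left s2_integral) (use x0 in simp)
      have diff: "integral {0..x} (\<lambda>s. s^2 * (\<rho> s - \<rho> 0)) = integral {0..x} (\<lambda>s. s^2 * \<rho> s) - x^3/3 * \<rho> 0"
      proof -
        have "integral {0..x} (\<lambda>s. s^2 * \<rho> s - s^2 * \<rho> 0) = integral {0..x} (\<lambda>s. s^2 * \<rho> s) - integral {0..x} (\<lambda>s. s^2 * \<rho> 0)"
          by (rule integral_diff[OF i1]) (intro integrable_continuous_real continuous_intros)
        moreover have "(\<lambda>s. s^2 * (\<rho> s - \<rho> 0)) = (\<lambda>s. s^2 * \<rho> s - s^2 * \<rho> 0)"
          by (simp add: algebra_simps)
        ultimately show ?thesis using I0 by (simp only:)
      qed
      have bnd: "norm (integral {0..x} (\<lambda>s. s^2 * (\<rho> s - \<rho> 0))) \<le> integral {0..x} (\<lambda>s. s^2 * (e/8))"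
      proof (rule integral_norm_bound_integral[OF i2 i3])
        fix s assume s: "s \<in> {0..x}"
        have "dist (\<rho> s) (\<rho> 0) < e/8" using d(2)[of s] s x dx by (auto simp: dist_real_def)
        then have "\<bar>\<rho> s - \<rho> 0\<bar> \<le> e/8" by (simp add: dist_real_def)
        then show "norm (s^2 * (\<rho> s - \<rho> 0)) \<le> s^2 * (e/8)"
          using mult_left_mono[OF \<open>\<bar>\<rho> s - \<rho> 0\<bar> \<le> e/8\<close> zero_le_power2[of s]] by (simp add: abs_mult)
      qed
      have bnd2: "\<bar>integral {0..x} (\<lambda>s. s^2 * (\<rho> s - \<rho> 0))\<bar> \<le> x^3/3 * (e/8)"
        using bnd unfolding Ie by simp
      have "Aext \<rho> x - Aext \<rho> 0 = 4 * pi * integral {0..x} (\<lambda>s. s^2 * (\<rho> s - \<rho> 0)) / x^3"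
        unfolding diff using x0 by (simp add: Aext_def mass_def field_simps)
      then have "\<bar>Aext \<rho> x - Aext \<rho> 0\<bar> = 4 * pi * \<bar>integral {0..x} (\<lambda>s. s^2 * (\<rho> s - \<rho> 0))\<bar> / x^3"
        using x0 by (simp add: abs_mult abs_divide)
      also have "\<dots> \<le> 4 * pi * (x^3/3 * (e/8)) / x^3"
        using bnd2 x0 by (intro divide_right_mono mult_left_mono) auto
      also have "\<dots> = pi * e / 6" using x0 by (simp add: field_simps)
      also have "\<dots> < e" using pi_less_4 e by (simp add: field_simps)
      finally show ?thesis by (simp add: dist_real_def)
    qed
  qed
qed

lemma Aext_cont:
  assumes f: "continuous_on (Icr R) \<rho>"
  shows "continuous_on (Icr R) (Aext \<rho>)"
proof (rule CONT)
  fix b assume b: "b \<in> PP R"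
  have fb: "continuous_on {0..b} \<rho>" using continuous_on_subset[OF f Icc_sub[OF b]] .
  show "continuous_on {0..b} (Aext \<rho>)"
    unfolding continuous_on_eq_continuous_within
  proof
    fix x assume x: "x \<in> {0..b}"
    show "continuous (at x within {0..b}) (Aext \<rho>)"
    proof (cases "x = 0")
      case True then show ?thesis using Aext_cont0[OF fb] b by (simp add: PP_def)
    next
      case False
      then have "x \<in> PP R" using x b Icc_sub[OF b] PP_Icr by auto
      then have "isCont (Aext \<rho>) x" using Aext_deriv[OF f] DERIV_isCont by blast
      then show ?thesis by (simp add: continuous_at_imp_continuous_at_within)
    qed
  qed
qed


lemma alg0: fixes r A p :: real
  assumes "r \<noteq> 0" "1 - 2*r^2*A \<noteq> 0"
  shows "(r^3*A + 4*pi*p*r^3)/(r^2*(1 - 2*(r^3*A)/r)) = r*(A+4*pi*p)/(1-2*r^2*A)"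
proof -
  have e: "1 - 2*(r^3*A)/r = 1-2*r^2*A" using assms(1)
    by (simp add: field_simps power2_eq_square power3_eq_cube)
  have "r^3*A + 4*pi*p*r^3 = r^2 * (r*(A+4*pi*p))" by (simp add: algebra_simps power2_eq_square power3_eq_cube)
  then show ?thesis unfolding e using assms by simp
qed

lemma alg1: fixes r D n N' D' :: real
  assumes "r > 0" "D > 0"
  shows "((2 * r * n + N' * r^2) * D - r^2 * n * D') / (D * D)
     = (r^2 * (2 * n + r * N') / D - r^2 * n * (r * D') / D^2) / r"
  using assms by (simp add: field_simps power2_eq_square)



lemma alg2: fixes c P W H Wd r T :: real
  assumes "r \<noteq> 0" "T \<noteq> 0" "W = T - 1" "H = (W/r)*(1-W)/T"
  shows "(c/3*(P*(2*H)) * (T*T) - c/3*P*((0 + Wd/r)*T + (0 + Wd/r)*T)) / ((T*T)*(T*T))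
     = (c/3*P/T^2 * (2*W*(1-W) - 2*Wd)/T)/r"
  using assms(1,2) unfolding assms(4) assms(3) by (simp add: field_simps power2_eq_square)

lemma alg3: fixes r W U Ud Wd \<rho> p G p' T :: real
  assumes "r \<noteq> 0" "T \<noteq> 0" "W = T - 1" "G = W/r" "Ud = U*(2*W*(1-W) - 2*Wd)/T"
  shows "-(\<rho>+p)*G - (Ud/r*(1+2*W) + (0 + 2*(Wd/r))*U) = -((\<rho> + 3*U + Ud) + (p - U*(1+2*W)))*G"
  using assms(1,2) unfolding assms(4,5) assms(3) by (simp add: field_simps)

lemma alg4: fixes r A p U W D E :: real
  assumes "r \<noteq> 0" "D \<noteq> 0" "E \<noteq> 0" "D = 1 - 2*r^2*A" "E = 1 - 2*r^2*A - 8*pi*r^2*U"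
    "W = r*(r*(A+4*pi*p)/D)"
  shows "(r^3*(A + 4*pi*U) + 4*pi*(p - U*(1+2*W))*r^3)/(r^2*(1 - 2*(r^3*(A + 4*pi*U))/r))
     = r*(A+4*pi*p)/D"
proof -
  have e: "1 - 2*(r^3*(A + 4*pi*U))/r = E" using assms(1) unfolding assms(5)
    by (simp add: field_simps power2_eq_square power3_eq_cube)
  show ?thesis unfolding e assms(6) using assms(1,2,3)
    by (simp add: field_simps power2_eq_square power3_eq_cube) (simp add: assms(4,5) algebra_simps power2_eq_square)
qed

lemma alg8: fixes r A p U D :: real
  assumes "r \<noteq> 0" "D \<noteq> 0" "D = 1 - 2*r^2*A"
  shows "- (4*pi*r^3*U / (4*pi*r^3)) * (1 + 8*pi*p*r^2) / (1 - 2*(r^3*A)/r) = - U * (1 + 2*(r*(r*(A + 4*pi*p)/D)))"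
proof -
  have e: "1 - 2*(r^3*A)/r = D" using assms(1) unfolding assms(3)
    by (simp add: field_simps power2_eq_square power3_eq_cube)
  show ?thesis unfolding e using assms(1,2) by (simp add: field_simps) (simp add: assms(3) algebra_simps power2_eq_square)
qed

lemma alg5: fixes r A A0 p0 q W D E :: real
  assumes "r \<noteq> 0" "D \<noteq> 0" "E \<noteq> 0" "D = 1 - 2*r^2*A0" "E = 1 - 2*r^2*A"
    "W = r*(r*(A0+4*pi*p0)/D)"
    "(r^3*A + 4*pi*q*r^3)/(r^2*(1-2*(r^3*A)/r)) = r*(A0+4*pi*p0)/D"
  shows "q = p0 - (A-A0)/(4*pi) * (1+2*W)"
proof -
  have e: "1 - 2*(r^3*A)/r = E" using assms(1) unfolding assms(5)
    by (simp add: field_simps power2_eq_square power3_eq_cube)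
  have "(A + 4*pi*q)*D*r^3 = (A0+4*pi*p0)*E*r^3"
    using assms(7) unfolding e using assms(1,2,3)
    by (simp add: field_simps power2_eq_square power3_eq_cube)
  then have "(A + 4*pi*q)*D = (A0+4*pi*p0)*E" using assms(1) by simp
  then have "4*pi*q*D = (A0+4*pi*p0)*E - A*D" by (simp add: algebra_simps)
  then have "q = ((A0+4*pi*p0)*E - A*D)/(4*pi*D)" using assms(2) by (simp add: field_simps)
  also have "\<dots> = p0 - (A-A0)/(4*pi) * (1+2*W)"
    unfolding assms(6) using assms(2) by (simp add: field_simps) (simp add: assms(4,5) algebra_simps power2_eq_square)
  finally show ?thesis .
qed

lemma alg6: fixes r T W G p p0 u u' \<rho> \<rho>0 Wd :: real
  assumes "r \<noteq> 0" "T \<noteq> 0" "W = T - 1" "G = W/r" "p = p0 - u*(1+2*W)" "\<rho> = \<rho>0 + 3*u + r*u'"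
    "-(\<rho> + p)*G = -(\<rho>0+p0)*G - (u'*(1+2*W) + (0+2*(Wd/r))*u)"
  shows "r*u' = u*(2*W*(1-W) - 2*Wd)/T"
proof -
  have "r * (-(\<rho> + p)*G) = r * (-(\<rho>0+p0)*G - (u'*(1+2*W) + (0+2*(Wd/r))*u))" using assms(7) by simp
  then have h: "T * (r * (r * (r * (r * u')))) +
      (r * (r * (r * (u * 4))) +
       (Wd * (r * (r * (r * (u * 2)))) +
        T * (T * (r * (r * (r * (u * 2))))))) =
      T * (r * (r * (r * (u * 6))))"
    unfolding assms(4,5,6) assms(3) using assms(1) by (simp add: field_simps)
  have "r^3 * (r*u'*T) = r^3 * (u*(2*W*(1-W) - 2*Wd))"
    unfolding assms(3) using h by algebra
  then have "r*u'*T = u*(2*W*(1-W) - 2*Wd)" using assms(1) by simp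
  then show ?thesis using assms(2) by (simp add: field_simps)
qed

lemma alg7: fixes r T W H u u' P Wd :: real
  assumes "r \<noteq> 0" "T \<noteq> 0" "P \<noteq> 0" "W = T - 1" "H = (W/r)*(1-W)/T" "r*u' = u*(2*W*(1-W) - 2*Wd)/T"
  shows "((u' * (T*T) + ((0+Wd/r)*T + (0+Wd/r)*T) * u) * P - u*(T*T) * (P*(2*H))) / (P*P) = 0"
proof -
  have u': "u' = u*(2*W*(1-W) - 2*Wd)/T/r" using assms(1,2,6) by (simp add: field_simps)
  show ?thesis unfolding u' assms(5) assms(4) using assms(1,2,3) by (simp add: field_simps)
qed


lemma PP_convex: "convex (PP R)"
proof (cases R)
  case (real x)
  then have "PP R = {0<..<x}" by (auto simp: PP_def)
  then show ?thesis by (simp add: convex_real_interval)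
next
  case PInf
  then have "PP R = {0<..}" by (auto simp: PP_def)
  then show ?thesis by (simp add: convex_real_interval)
next
  case MInf
  then have "PP R = {}" by (auto simp: PP_def)
  then show ?thesis by simp
qed

locale tov =
  fixes \<rho>0 p0 :: "real \<Rightarrow> real" and R :: ereal
  assumes sol0: "TOV_regular R \<rho>0 p0"
    and pos: "\<forall>r\<in>Icr R. 1 + r * gfun (mass \<rho>0) p0 r > 0"
begin

definition "A0 = Aext \<rho>0"
definition "N1 r = A0 r + 4 * pi * p0 r"
definition "D r = 1 - 2 * r^2 * A0 r"
definition "g0 = gfun (mass \<rho>0) p0"
definition "w r = r * g0 r"
definition "h = (\<lambda>s. gfun (mass \<rho>0) p0 s * (1 - s * gfun (mass \<rho>0) p0 s) / (1 + s * gfun (mass \<rho>0) p0 s))"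
definition "Wd r = r^2 * (2 * N1 r + (4 * pi * \<rho>0 r - 3 * A0 r - 4 * pi * (\<rho>0 r + p0 r) * w r)) / D r
   - r^2 * N1 r * (2 * r^2 * A0 r - 8 * pi * r^2 * \<rho>0 r) / (D r)^2"
definition "U c r = c / 3 * Phi \<rho>0 p0 r / (1 + w r)^2"
definition "Ud c r = U c r * (2 * w r * (1 - w r) - 2 * Wd r) / (1 + w r)"

lemma rho0_cont: "continuous_on (Icr R) \<rho>0" and p0_cont: "continuous_on (Icr R) p0"
  using sol0 by (auto simp: TOV_regular_def)

lemma p0_deriv: assumes r: "r \<in> PP R" shows "(p0 has_real_derivative (- (\<rho>0 r + p0 r) * g0 r)) (at r)"
proof -
  have "r \<in> Icr R" "r > 0" using r PP_sub by (auto simp: PP_def)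
  then show ?thesis using sol0 unfolding TOV_regular_def g0_def by blast
qed

lemma sol0_pos: "r \<in> Icr R \<Longrightarrow> r > 0 \<Longrightarrow> 1 - 2 * mass \<rho>0 r / r > 0"
  using sol0 unfolding TOV_regular_def by blast

lemma A0_cont: "continuous_on (Icr R) A0"
  unfolding A0_def by (rule Aext_cont[OF rho0_cont])

lemma A0_deriv: "r \<in> PP R \<Longrightarrow> (A0 has_real_derivative (4 * pi * \<rho>0 r - 3 * A0 r) / r) (at r)"
  unfolding A0_def by (rule Aext_deriv[OF rho0_cont])

lemma D_pos: assumes r: "r \<in> Icr R" shows "D r > 0"
proof (cases "r = 0")
  case True then show ?thesis by (simp add: D_def)
next
  case False
  then have r0: "r > 0" using r by (simp add: Icr_def)
  have "1 - 2 * mass \<rho>0 r / r > 0" using sol0_pos r r0 by blast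
  moreover have "mass \<rho>0 r / r = r^2 * A0 r" using r0
    unfolding mass_Aext A0_def by (simp add: power2_eq_square power3_eq_cube)
  ultimately show ?thesis unfolding D_def by simp
qed

lemma g0_eq: assumes r: "r \<in> Icr R" shows "g0 r = r * N1 r / D r"
proof (cases "r = 0")
  case True then show ?thesis by (simp add: g0_def gfun_def)
next
  case False
  have Dp: "1 - 2 * r^2 * A0 r \<noteq> 0" using D_pos[OF r] by (simp add: D_def)
  have "g0 r = (r^3*A0 r + 4*pi*p0 r*r^3)/(r^2*(1 - 2*(r^3*A0 r)/r))"
    unfolding g0_def gfun_def mass_Aext A0_def ..
  also have "\<dots> = r*(A0 r+4*pi*p0 r)/(1-2*r^2*A0 r)" by (rule alg0[OF False Dp])
  finally show ?thesis by (simp add: N1_def D_def)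
qed

lemma D_cont: "continuous_on (Icr R) D"
  unfolding D_def[abs_def] by (intro continuous_intros A0_cont)

lemma g0_cont: "continuous_on (Icr R) g0"
proof -
  have nz: "\<forall>r\<in>Icr R. D r \<noteq> 0" using D_pos by force
  have c1: "continuous_on (Icr R) (\<lambda>r. r * N1 r)"
    unfolding N1_def[abs_def] by (intro continuous_intros A0_cont p0_cont)
  have "continuous_on (Icr R) (\<lambda>r. r * N1 r / D r)"
    by (rule continuous_on_divide[OF c1 D_cont nz])
  then show ?thesis by (rule continuous_on_eq) (simp add: g0_eq)
qed

lemma w_cont: "continuous_on (Icr R) w"
  unfolding w_def[abs_def] by (intro continuous_intros g0_cont)

lemma w_pos: "r \<in> Icr R \<Longrightarrow> 1 + w r > 0"
  using pos by (simp add: w_def g0_def)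

lemma h_eq: "h r = g0 r * (1 - w r) / (1 + w r)"
  by (simp add: h_def g0_def w_def)

lemma h_cont: "continuous_on (Icr R) h"
proof -
  have "continuous_on (Icr R) (\<lambda>r. g0 r * (1 - w r) / (1 + w r))"
    using w_pos by (intro continuous_intros g0_cont w_cont) (auto simp: less_le)
  then show ?thesis by (simp add: h_eq[abs_def])
qed

lemma Phi_eq: "Phi \<rho>0 p0 r = exp (2 * integral {0..r} h)"
  by (simp add: Phi_def h_def)

lemma Phi_cont: "continuous_on (Icr R) (Phi \<rho>0 p0)"
  unfolding Phi_eq[abs_def] by (intro continuous_intros int_cont h_cont)

lemma Phi0[simp]: "Phi \<rho>0 p0 0 = 1" by (simp add: Phi_eq)

lemma Phi_pos: "Phi \<rho>0 p0 r > 0" by (simp add: Phi_eq)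

lemma Phi_deriv: "r \<in> PP R \<Longrightarrow> (Phi \<rho>0 p0 has_real_derivative Phi \<rho>0 p0 r * (2 * h r)) (at r)"
  unfolding Phi_eq[abs_def]
  by (rule derivative_eq_intros int_deriv[OF h_cont] refl | simp)+

lemma w_deriv: assumes r: "r \<in> PP R" shows "(w has_real_derivative Wd r / r) (at r)"
proof -
  have rI: "r \<in> Icr R" using r PP_sub by auto
  have r0: "r > 0" using r by (simp add: PP_def)
  have Dp: "D r > 0" using D_pos[OF rI] .
  let ?a = "(4 * pi * \<rho>0 r - 3 * A0 r) / r"
  let ?p = "- (\<rho>0 r + p0 r) * g0 r"
  let ?N' = "?a + 4 * pi * ?p"
  let ?D' = "- (2 * (2 * r * A0 r + r^2 * ?a))"
  have dN: "(N1 has_real_derivative ?N') (at r)"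
    unfolding N1_def[abs_def] by (intro DERIV_add DERIV_cmult A0_deriv[OF r] p0_deriv[OF r])
  have dD: "(D has_real_derivative ?D') (at r)"
    unfolding D_def[abs_def]
    by (rule derivative_eq_intros A0_deriv[OF r] refl | simp)+
  have dq: "((\<lambda>x. x^2 * N1 x / D x) has_real_derivative
      ((2 * r * N1 r + ?N' * r^2) * D r - r^2 * N1 r * ?D') / (D r * D r)) (at r)"
  proof (rule DERIV_divide[OF DERIV_mult[OF _ dN] dD])
    show "((\<lambda>x. x^2) has_real_derivative 2 * r) (at r)"
      by (rule derivative_eq_intros refl | simp)+
  qed (use Dp in auto)
  have X: "r * ?N' = 4 * pi * \<rho>0 r - 3 * A0 r - 4 * pi * (\<rho>0 r + p0 r) * w r"
    using r0 by (simp add: w_def field_simps)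
  have Y: "r * ?D' = 2 * r^2 * A0 r - 8 * pi * r^2 * \<rho>0 r"
    using r0 by (simp add: field_simps power2_eq_square)
  have eq: "((2 * r * N1 r + ?N' * r^2) * D r - r^2 * N1 r * ?D') / (D r * D r) = Wd r / r"
    using alg1[OF r0 Dp, of "N1 r" "?N'" "?D'"] unfolding X Y Wd_def .
  have "((\<lambda>x. x^2 * N1 x / D x) has_real_derivative Wd r / r) (at r)" using dq eq by simp
  then show ?thesis
  proof (rule has_field_derivative_transform_within_open[OF _ PP_open r])
    fix x assume "x \<in> PP R"
    then have "x \<in> Icr R" using PP_sub by auto
    then show "x^2 * N1 x / D x = w x" by (simp add: w_def g0_eq power2_eq_square)
  qed
qed


lemma w0[simp]: "w 0 = 0" by (simp add: w_def)
lemma Wd0[simp]: "Wd 0 = 0" by (simp add: Wd_def)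

lemma Wd_cont: "continuous_on (Icr R) Wd"
proof -
  have nz: "\<And>r. r \<in> Icr R \<Longrightarrow> D r \<noteq> 0" using D_pos by (metis less_irrefl)
  show ?thesis unfolding Wd_def[abs_def] N1_def
    by (intro continuous_intros A0_cont p0_cont rho0_cont w_cont D_cont) (auto simp: nz)
qed


lemma g0_w: "r \<noteq> 0 \<Longrightarrow> g0 r = w r / r" by (simp add: w_def)

lemma U0[simp]: "U c 0 = c / 3" by (simp add: U_def)
lemma Ud0[simp]: "Ud c 0 = 0" by (simp add: Ud_def)

lemma U_cont: "continuous_on (Icr R) (U c)"
proof -
  have nz: "\<And>r. r \<in> Icr R \<Longrightarrow> 1 + w r \<noteq> 0" using w_pos by (metis less_irrefl)
  show ?thesis unfolding U_def[abs_def]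
    by (intro continuous_intros Phi_cont w_cont) (use nz in auto)
qed

lemma Ud_cont: "continuous_on (Icr R) (Ud c)"
proof -
  have nz: "\<And>r. r \<in> Icr R \<Longrightarrow> 1 + w r \<noteq> 0" using w_pos by (metis less_irrefl)
  show ?thesis unfolding Ud_def[abs_def]
    by (intro continuous_intros U_cont w_cont Wd_cont) (use nz in auto)
qed

lemma U_deriv: assumes r: "r \<in> PP R" shows "(U c has_real_derivative Ud c r / r) (at r)"
proof -
  have rI: "r \<in> Icr R" using r PP_sub by auto
  have r0: "r > 0" using r by (simp add: PP_def)
  have T: "1 + w r \<noteq> 0" using w_pos[OF rI] by simp
  have dT: "((\<lambda>x. 1 + w x) has_real_derivative 0 + Wd r / r) (at r)"
    by (intro DERIV_add DERIV_const w_deriv[OF r])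
  have "((\<lambda>x. c/3 * Phi \<rho>0 p0 x / ((1 + w x) * (1 + w x))) has_real_derivative
     (c/3*(Phi \<rho>0 p0 r*(2*h r)) * ((1+w r)*(1+w r)) - c/3*Phi \<rho>0 p0 r*((0 + Wd r/r)*(1+w r) + (0 + Wd r/r)*(1+w r))) / (((1+w r)*(1+w r))*((1+w r)*(1+w r)))) (at r)"
    by (rule DERIV_divide[OF DERIV_cmult[OF Phi_deriv[OF r]] DERIV_mult[OF dT dT]]) (use T in simp)
  also have "(c/3*(Phi \<rho>0 p0 r*(2*h r)) * ((1+w r)*(1+w r)) - c/3*Phi \<rho>0 p0 r*((0 + Wd r/r)*(1+w r) + (0 + Wd r/r)*(1+w r))) / (((1+w r)*(1+w r))*((1+w r)*(1+w r)))
     = (c/3*Phi \<rho>0 p0 r/(1+w r)^2 * (2*w r*(1-w r) - 2*Wd r)/(1+w r))/r"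
    by (rule alg2) (use r0 T in \<open>auto simp: h_eq g0_w\<close>)
  finally show ?thesis unfolding U_def[abs_def] Ud_def by (simp add: power2_eq_square)
qed

lemma dm_eq: "dm \<rho>0 p0 c r = 4 * pi * r^3 * U c r"
  by (simp add: dm_def U_def w_def g0_def)

lemma pm_eq: "pert_m \<rho>0 p0 c r = r^3 * (A0 r + 4 * pi * U c r)"
  by (simp add: pert_m_def dm_eq mass_Aext A0_def algebra_simps)

lemma pm_cont: "continuous_on (Icr R) (pert_m \<rho>0 p0 c)"
  unfolding pm_eq[abs_def] by (intro continuous_intros A0_cont U_cont)

lemma pm_deriv: assumes r: "r \<in> PP R"
  shows "(pert_m \<rho>0 p0 c has_real_derivative 4 * pi * r^2 * (\<rho>0 r + 3 * U c r + Ud c r)) (at r)"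
proof -
  have r0: "r > 0" using r by (simp add: PP_def)
  have "((\<lambda>x. mass \<rho>0 x + 4 * pi * (x^3 * U c x)) has_real_derivative
      4 * pi * r^2 * \<rho>0 r + 4 * pi * (3 * r^2 * U c r + Ud c r / r * r^3)) (at r)"
  proof (intro DERIV_add DERIV_cmult mass_deriv[OF rho0_cont r])
    show "((\<lambda>x. x^3 * U c x) has_real_derivative 3 * r^2 * U c r + Ud c r / r * r^3) (at r)"
      by (rule derivative_eq_intros U_deriv[OF r] refl | simp)+
  qed
  moreover have "4 * pi * r^2 * \<rho>0 r + 4 * pi * (3 * r^2 * U c r + Ud c r / r * r^3)
     = 4 * pi * r^2 * (\<rho>0 r + 3 * U c r + Ud c r)"
    using r0 by (simp add: field_simps power2_eq_square power3_eq_cube)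
  moreover have "(\<lambda>x. mass \<rho>0 x + 4 * pi * (x^3 * U c x)) = pert_m \<rho>0 p0 c"
    by (auto simp: pert_m_def dm_eq)
  ultimately show ?thesis by simp
qed

lemma prho_eq: assumes r: "r \<in> Icr R"
  shows "pert_rho \<rho>0 p0 c r = \<rho>0 r + 3 * U c r + Ud c r"
proof (cases "r = 0")
  case True then show ?thesis by (simp add: pert_rho_def)
next
  case False
  then have rP: "r \<in> PP R" using r PP_Icr by (auto simp: Icr_def)
  have r0: "r > 0" using rP by (simp add: PP_def)
  show ?thesis using DERIV_imp_deriv[OF pm_deriv[OF rP]] False r0
    by (simp add: pert_rho_def)
qed

lemma prho_cont: "continuous_on (Icr R) (pert_rho \<rho>0 p0 c)"
proof -
  have "continuous_on (Icr R) (\<lambda>r. \<rho>0 r + 3 * U c r + Ud c r)"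
    by (intro continuous_intros rho0_cont U_cont Ud_cont)
  then show ?thesis by (rule continuous_on_eq) (simp add: prho_eq)
qed


lemma dp_eq: assumes r: "r \<in> Icr R" shows "dp \<rho>0 p0 c r = - U c r * (1 + 2 * w r)"
proof (cases "r = 0")
  case True then show ?thesis by (simp add: dp_def)
next
  case False
  have Dp: "D r \<noteq> 0" using D_pos[OF r] by simp
  have "dp \<rho>0 p0 c r = - (4*pi*r^3*U c r / (4*pi*r^3)) * (1 + 8*pi*p0 r*r^2) / (1 - 2*(r^3*A0 r)/r)"
    using False by (simp add: dp_def dm_eq mass_Aext A0_def)
  also have "\<dots> = - U c r * (1 + 2*(r*(r*(A0 r + 4*pi*p0 r)/D r)))"
    by (rule alg8[OF False Dp]) (simp add: D_def)
  also have "\<dots> = - U c r * (1 + 2 * w r)" using r by (simp add: w_def g0_eq N1_def)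
  finally show ?thesis .
qed

lemma pp_eq: "r \<in> Icr R \<Longrightarrow> pert_p \<rho>0 p0 c r = p0 r - U c r * (1 + 2 * w r)"
  by (simp add: pert_p_def dp_eq)

lemma pp_cont: "continuous_on (Icr R) (pert_p \<rho>0 p0 c)"
proof -
  have "continuous_on (Icr R) (\<lambda>r. p0 r - U c r * (1 + 2 * w r))"
    by (intro continuous_intros p0_cont U_cont w_cont)
  then show ?thesis by (rule continuous_on_eq) (simp add: pp_eq)
qed

lemma pp_deriv: assumes r: "r \<in> PP R"
  shows "(pert_p \<rho>0 p0 c has_real_derivative - (pert_rho \<rho>0 p0 c r + pert_p \<rho>0 p0 c r) * g0 r) (at r)"
proof -
  have rI: "r \<in> Icr R" using r PP_sub by auto
  have r0: "r \<noteq> 0" using r by (simp add: PP_def)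
  have T: "1 + w r \<noteq> 0" using w_pos[OF rI] by simp
  have "((\<lambda>x. p0 x - U c x * (1 + 2 * w x)) has_real_derivative
     - (\<rho>0 r + p0 r) * g0 r - (Ud c r / r * (1 + 2 * w r) + (0 + 2 * (Wd r / r)) * U c r)) (at r)"
    by (intro DERIV_diff p0_deriv[OF r] DERIV_mult U_deriv[OF r] DERIV_add DERIV_const DERIV_cmult w_deriv[OF r])
  also have "- (\<rho>0 r + p0 r) * g0 r - (Ud c r / r * (1 + 2 * w r) + (0 + 2 * (Wd r / r)) * U c r)
     = - ((\<rho>0 r + 3 * U c r + Ud c r) + (p0 r - U c r * (1 + 2 * w r))) * g0 r"
    by (rule alg3[OF r0 T]) (auto simp: g0_w[OF r0] Ud_def)
  also have "\<dots> = - (pert_rho \<rho>0 p0 c r + pert_p \<rho>0 p0 c r) * g0 r"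
    using rI by (simp add: prho_eq pp_eq)
  finally show ?thesis
  proof (rule has_field_derivative_transform_within_open[OF _ PP_open r])
    fix x assume "x \<in> PP R"
    then have "x \<in> Icr R" using PP_sub by auto
    then show "p0 x - U c x * (1 + 2 * w x) = pert_p \<rho>0 p0 c x" by (simp add: pp_eq)
  qed
qed

lemma gfun_pert: assumes r: "r \<in> Icr R" and h: "r > 0 \<longrightarrow> 1 - 2 * pert_m \<rho>0 p0 c r / r > 0"
  shows "gfun (pert_m \<rho>0 p0 c) (pert_p \<rho>0 p0 c) r = g0 r"
proof (cases "r = 0")
  case True then show ?thesis by (simp add: gfun_def g0_def)
next
  case False
  then have r0: "r > 0" using r by (simp add: Icr_def)
  have Dp: "D r \<noteq> 0" using D_pos[OF r] by simp
  have E: "1 - 2*(r^3*(A0 r + 4*pi*U c r))/r > 0" using h r0 by (simp add: pm_eq)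
  have Ee: "1 - 2*(r^3*(A0 r + 4*pi*U c r))/r = 1 - 2*r^2*A0 r - 8*pi*r^2*U c r"
    using r0 by (simp add: field_simps power2_eq_square power3_eq_cube)
  have En: "1 - 2*r^2*A0 r - 8*pi*r^2*U c r \<noteq> 0" using E Ee by simp
  have "gfun (pert_m \<rho>0 p0 c) (pert_p \<rho>0 p0 c) r =
     (r^3*(A0 r + 4*pi*U c r) + 4*pi*(p0 r - U c r*(1+2*w r))*r^3)/(r^2*(1 - 2*(r^3*(A0 r + 4*pi*U c r))/r))"
    using r by (simp add: gfun_def pm_eq pp_eq)
  also have "\<dots> = r*(A0 r+4*pi*p0 r)/D r"
    by (rule alg4[OF False Dp En]) (use r in \<open>auto simp: D_def w_def g0_eq N1_def\<close>)
  also have "\<dots> = g0 r" using r by (simp add: g0_eq N1_def)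
  finally show ?thesis .
qed

lemma mass_prho: assumes r: "r \<in> Icr R" shows "mass (pert_rho \<rho>0 p0 c) r = pert_m \<rho>0 p0 c r"
proof -
  have r0: "0 \<le> r" using r by (simp add: Icr_def)
  have sub: "{0..r} \<subseteq> Icr R" using r by (auto simp: Icr_def) (meson ereal_less_eq(3) order_le_less_trans)
  have "((\<lambda>s. 4 * pi * (s^2 * pert_rho \<rho>0 p0 c s)) has_integral (pert_m \<rho>0 p0 c r - pert_m \<rho>0 p0 c 0)) {0..r}"
  proof (rule fundamental_theorem_of_calculus_interior[OF r0])
    show "continuous_on {0..r} (pert_m \<rho>0 p0 c)" using continuous_on_subset[OF pm_cont sub] .
  next
    fix x assume x: "x \<in> {0<..<r}"
    then have "x \<in> Icr R" using sub by auto
    then have xP: "x \<in> PP R" by (rule PP_Icr) (use x in auto)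
    have e: "pert_rho \<rho>0 p0 c x = \<rho>0 x + 3 * U c x + Ud c x" by (rule prho_eq) fact
    show "(pert_m \<rho>0 p0 c has_vector_derivative 4 * pi * (x^2 * pert_rho \<rho>0 p0 c x)) (at x)"
      using pm_deriv[OF xP, of c] unfolding e has_real_derivative_iff_has_vector_derivative
      by (simp add: mult.assoc)
  qed
  then have "integral {0..r} (\<lambda>s. 4 * pi * (s^2 * pert_rho \<rho>0 p0 c s)) = pert_m \<rho>0 p0 c r - pert_m \<rho>0 p0 c 0"
    by (rule integral_unique)
  then have "integral {0..r} (\<lambda>s. 4 * pi * (s^2 * pert_rho \<rho>0 p0 c s)) = pert_m \<rho>0 p0 c r"
    by (simp add: pm_eq)
  then show ?thesis by (simp add: mass_def)
qed

lemma dp_formula: assumes r: "r \<in> Icr R"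
  shows "dp \<rho>0 p0 c r = (- c / 3) / (1 + r * gfun (mass \<rho>0) p0 r)^2
            * (1 + 8 * pi * p0 r * r^2) / (1 - 2 * mass \<rho>0 r / r) * Phi \<rho>0 p0 r"
proof (cases "r = 0")
  case True then show ?thesis by (simp add: dp_def)
next
  case False
  have T: "1 + r * gfun (mass \<rho>0) p0 r \<noteq> 0" using pos r by (metis less_irrefl)
  show ?thesis using False T by (simp add: dp_def dm_def field_simps)
qed


lemma converse:
  assumes R': "R' \<le> R" and sol: "TOV_regular R' \<rho> p"
    and geq: "\<forall>r\<in>Icr R'. gfun (mass \<rho>) p r = g0 r"
  shows "\<exists>c. \<forall>r\<in>Icr R'. mass \<rho> r = pert_m \<rho>0 p0 c r \<and> \<rho> r = pert_rho \<rho>0 p0 c r \<and> p r = pert_p \<rho>0 p0 c r"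
proof -
  have sub: "Icr R' \<subseteq> Icr R" by (rule Icr_mono[OF R'])
  have subP: "PP R' \<subseteq> PP R" by (rule PP_mono[OF R'])
  have \<rho>c: "continuous_on (Icr R') \<rho>" and pc: "continuous_on (Icr R') p"
    using sol by (auto simp: TOV_regular_def)
  define c where "c = \<rho> 0 - \<rho>0 0"
  define A where "A = Aext \<rho>"
  define u where "u r = (A r - A0 r) / (4 * pi)" for r
  define ud where "ud r = ((4 * pi * \<rho> r - 3 * A r) / r - (4 * pi * \<rho>0 r - 3 * A0 r) / r) / (4 * pi)" for r
  have Ac: "continuous_on (Icr R') A" unfolding A_def by (rule Aext_cont[OF \<rho>c])
  have A0c: "continuous_on (Icr R') A0" by (rule continuous_on_subset[OF A0_cont sub])
  have wc: "continuous_on (Icr R') w" by (rule continuous_on_subset[OF w_cont sub])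
  have Phic: "continuous_on (Icr R') (Phi \<rho>0 p0)" by (rule continuous_on_subset[OF Phi_cont sub])
  have p0c: "continuous_on (Icr R') p0" by (rule continuous_on_subset[OF p0_cont sub])
  have uc: "continuous_on (Icr R') u" unfolding u_def[abs_def] by (intro continuous_intros Ac A0c) auto
  have u0: "u 0 = c / 3" by (simp add: u_def A_def A0_def Aext_def c_def field_simps)
  have mpos: "1 - 2 * mass \<rho> r / r > 0" if "r \<in> PP R'" for r
    using sol that PP_sub[of R'] unfolding TOV_regular_def PP_def by blast
  have pder: "(p has_real_derivative (- (\<rho> r + p r) * g0 r)) (at r)" if "r \<in> PP R'" for r
  proof -
    have "r \<in> Icr R'" "r > 0" using that PP_sub[of R'] by (auto simp: PP_def)
    then have "(p has_real_derivative (- (\<rho> r + p r) * gfun (mass \<rho>) p r)) (at r)"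
      using sol unfolding TOV_regular_def by blast
    then show ?thesis using geq \<open>r \<in> Icr R'\<close> by simp
  qed
  have prel: "p r = p0 r - u r * (1 + 2 * w r)" if rP: "r \<in> PP R'" for r
  proof -
    have rI: "r \<in> Icr R" using rP subP PP_sub by blast
    have rI': "r \<in> Icr R'" using rP PP_sub by blast
    have r0: "r \<noteq> 0" using rP by (simp add: PP_def)
    have Dn: "D r \<noteq> 0" using D_pos[OF rI] by simp
    have e: "(r^3 * A r) / r = r^2 * A r" using r0 by (simp add: power2_eq_square power3_eq_cube)
    have En: "1 - 2 * r^2 * A r \<noteq> 0" using mpos[OF rP] e unfolding mass_Aext A_def[symmetric] by simp
    have "gfun (mass \<rho>) p r = g0 r" using geq rI' by blast
    then have g: "(r^3*A r + 4*pi*p r*r^3)/(r^2*(1-2*(r^3*A r)/r)) = r*(A0 r+4*pi*p0 r)/D r"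
      unfolding gfun_def mass_Aext A_def[symmetric] g0_eq[OF rI] N1_def .
    have "p r = p0 r - (A r - A0 r)/(4*pi) * (1+2*w r)"
      by (rule alg5[OF r0 Dn En _ _ _ g]) (auto simp: D_def w_def g0_eq[OF rI] N1_def)
    then show ?thesis by (simp add: u_def)
  qed
  have prel_all: "p r = p0 r - u r * (1 + 2 * w r)" if rI: "r \<in> Icr R'" for r
  proof -
    have "continuous_on (Icr R') (\<lambda>x. p x - (p0 x - u x * (1 + 2 * w x)))"
      by (intro continuous_intros pc p0c uc wc)
    from const_closure[OF this _ rI, of 0] prel show ?thesis by simp
  qed
  have key: "r * ud r = u r * (2 * w r * (1 - w r) - 2 * Wd r) / (1 + w r)"
    and uder: "(u has_real_derivative ud r) (at r)"
    and rho_eq: "\<rho> r = \<rho>0 r + 3 * u r + r * ud r"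
    if rP: "r \<in> PP R'" for r
  proof -
    have rP0: "r \<in> PP R" using rP subP by blast
    have rI: "r \<in> Icr R" using rP0 PP_sub by blast
    have r0: "r \<noteq> 0" using rP by (simp add: PP_def)
    have T: "1 + w r \<noteq> 0" using w_pos[OF rI] by simp
    show ud: "(u has_real_derivative ud r) (at r)"
      unfolding u_def[abs_def] ud_def A_def
      by (intro DERIV_cdivide DERIV_diff Aext_deriv[OF \<rho>c rP] A0_deriv[OF rP0])
    show rho: "\<rho> r = \<rho>0 r + 3 * u r + r * ud r"
      using r0 by (simp add: u_def ud_def field_simps)
    have d1: "((\<lambda>x. p0 x - u x * (1 + 2 * w x)) has_real_derivative (- (\<rho> r + p r) * g0 r)) (at r)"
    proof (rule has_field_derivative_transform_within_open[OF pder[OF rP] PP_open rP])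
      fix x assume "x \<in> PP R'" then show "p x = p0 x - u x * (1 + 2 * w x)" by (rule prel)
    qed
    have d2: "((\<lambda>x. p0 x - u x * (1 + 2 * w x)) has_real_derivative
       - (\<rho>0 r + p0 r) * g0 r - (ud r * (1 + 2 * w r) + (0 + 2 * (Wd r / r)) * u r)) (at r)"
      by (intro DERIV_diff p0_deriv[OF rP0] DERIV_mult ud DERIV_add DERIV_const DERIV_cmult w_deriv[OF rP0])
    have rel: "- (\<rho> r + p r) * g0 r = - (\<rho>0 r + p0 r) * g0 r - (ud r * (1 + 2 * w r) + (0 + 2 * (Wd r / r)) * u r)"
      by (rule DERIV_unique[OF d1 d2])
    show "r * ud r = u r * (2 * w r * (1 - w r) - 2 * Wd r) / (1 + w r)"
      by (rule alg6[OF r0 T _ _ prel[OF rP] rho rel]) (auto simp: g0_w[OF r0])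
  qed
  define K where "K x = u x * ((1 + w x) * (1 + w x)) / Phi \<rho>0 p0 x" for x
  have Kd: "(K has_real_derivative 0) (at r)" if rP: "r \<in> PP R'" for r
  proof -
    have rP0: "r \<in> PP R" using rP subP by blast
    have rI: "r \<in> Icr R" using rP0 PP_sub by blast
    have r0: "r \<noteq> 0" using rP by (simp add: PP_def)
    have T: "1 + w r \<noteq> 0" using w_pos[OF rI] by simp
    have P: "Phi \<rho>0 p0 r \<noteq> 0" using Phi_pos[of r] by simp
    have dT: "((\<lambda>x. 1 + w x) has_real_derivative 0 + Wd r / r) (at r)"
      by (intro DERIV_add DERIV_const w_deriv[OF rP0])
    let ?E = "((ud r * ((1 + w r) * (1 + w r)) + ((0 + Wd r / r) * (1 + w r) + (0 + Wd r / r) * (1 + w r)) * u r) * Phi \<rho>0 p0 r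
        - u r * ((1 + w r) * (1 + w r)) * (Phi \<rho>0 p0 r * (2 * h r))) / (Phi \<rho>0 p0 r * Phi \<rho>0 p0 r)"
    have d: "(K has_real_derivative ?E) (at r)"
      unfolding K_def[abs_def]
      by (rule DERIV_divide[OF DERIV_mult[OF uder[OF rP] DERIV_mult[OF dT dT]] Phi_deriv[OF rP0] P])
    have e: "?E = 0"
      by (rule alg7[OF r0 T P _ _ key[OF rP]]) (auto simp: h_eq g0_w[OF r0])
    show ?thesis using d unfolding e .
  qed
  obtain k where k: "\<And>x. x \<in> PP R' \<Longrightarrow> K x = k"
    using has_field_derivative_zero_constant[OF PP_convex, of R' K] Kd
    by (metis has_field_derivative_at_within)
  have Kc: "continuous_on (Icr R') K"
  proof -
    have "\<forall>x\<in>Icr R'. Phi \<rho>0 p0 x \<noteq> 0" using Phi_pos by (metis less_irrefl)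
    then show ?thesis unfolding K_def[abs_def] by (intro continuous_intros uc wc Phic) auto
  qed
  have Kall: "K r = c / 3" if rI: "r \<in> Icr R'" for r
  proof -
    have "0 \<in> Icr R'" using rI by (auto simp: Icr_def) (meson ereal_less_eq(3) order_le_less_trans)
    then have "K 0 = k" using const_closure[OF Kc k] by blast
    moreover have "K 0 = c / 3" by (simp add: K_def u0)
    moreover have "K r = k" using const_closure[OF Kc k rI] .
    ultimately show ?thesis by simp
  qed
  have uU: "u r = U c r" if rI: "r \<in> Icr R'" for r
  proof -
    have rI0: "r \<in> Icr R" using rI sub by blast
    have T: "1 + w r \<noteq> 0" using w_pos[OF rI0] by simp
    have P: "Phi \<rho>0 p0 r \<noteq> 0" using Phi_pos[of r] by simp
    from Kall[OF rI] have "u r * ((1 + w r) * (1 + w r)) / Phi \<rho>0 p0 r = c / 3" by (simp add: K_def)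
    then have e1: "u r * ((1 + w r) * (1 + w r)) = c / 3 * Phi \<rho>0 p0 r" using P by (simp add: divide_eq_eq)
    have TT: "(1 + w r) * (1 + w r) \<noteq> 0" using T by simp
    have "u r = c / 3 * Phi \<rho>0 p0 r / ((1 + w r) * (1 + w r))" using e1 TT by (simp add: eq_divide_eq)
    then show ?thesis by (simp add: U_def power2_eq_square)
  qed
  show ?thesis
  proof (intro exI[of _ c] ballI conjI)
    fix r assume rI: "r \<in> Icr R'"
    have rI0: "r \<in> Icr R" using rI sub by blast
    show "mass \<rho> r = pert_m \<rho>0 p0 c r"
      unfolding pm_eq mass_Aext A_def[symmetric] uU[OF rI, symmetric] by (simp add: u_def)
    show "p r = pert_p \<rho>0 p0 c r"
      using prel_all[OF rI] uU[OF rI] pp_eq[OF rI0] by simp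
    show "\<rho> r = pert_rho \<rho>0 p0 c r"
    proof (cases "r = 0")
      case True then show ?thesis by (simp add: pert_rho_def c_def)
    next
      case False
      then have rP: "r \<in> PP R'" using rI PP_Icr by (auto simp: Icr_def)
      have "r * ud r = Ud c r" using key[OF rP] uU[OF rI] by (simp add: Ud_def)
      then show ?thesis using rho_eq[OF rP] prho_eq[OF rI0] uU[OF rI] by simp
    qed
  qed
qed

end

theorem theoremP2:
  fixes \<rho>0 p0 :: "real \<Rightarrow> real" and R :: ereal
  assumes sol0: "TOV_regular R \<rho>0 p0"
    and pos: "\<forall>r\<in>Icr R. 1 + r * gfun (mass \<rho>0) p0 r > 0"
  shows
    "(\<forall>(d\<rho>c::real) (R'::ereal). R' \<le> R \<longrightarrow>
        (\<forall>r\<in>Icr R'. r > 0 \<longrightarrow> 1 - 2 * pert_m \<rho>0 p0 d\<rho>c r / r > 0) \<longrightarrow>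
        TOV_regular R' (pert_rho \<rho>0 p0 d\<rho>c) (pert_p \<rho>0 p0 d\<rho>c) \<and>
        (\<forall>r\<in>Icr R'. mass (pert_rho \<rho>0 p0 d\<rho>c) r = pert_m \<rho>0 p0 d\<rho>c r) \<and>
        (\<forall>r\<in>Icr R'. gfun (pert_m \<rho>0 p0 d\<rho>c) (pert_p \<rho>0 p0 d\<rho>c) r = gfun (mass \<rho>0) p0 r) \<and>
        pert_rho \<rho>0 p0 d\<rho>c 0 = \<rho>0 0 + d\<rho>c \<and>
        pert_p \<rho>0 p0 d\<rho>c 0 = p0 0 + (- d\<rho>c / 3) \<and>
        (\<forall>r\<in>Icr R'. dp \<rho>0 p0 d\<rho>c r =
            (- d\<rho>c / 3) / (1 + r * gfun (mass \<rho>0) p0 r)^2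
            * (1 + 8 * pi * p0 r * r^2) / (1 - 2 * mass \<rho>0 r / r) * Phi \<rho>0 p0 r))
     \<and>
     (\<forall>(\<rho>::real \<Rightarrow> real) (p::real \<Rightarrow> real) (R'::ereal). R' \<le> R \<longrightarrow>
        TOV_regular R' \<rho> p \<longrightarrow>
        (\<forall>r\<in>Icr R'. gfun (mass \<rho>) p r = gfun (mass \<rho>0) p0 r) \<longrightarrow>
        (\<exists>d\<rho>c::real. \<forall>r\<in>Icr R'.
            mass \<rho> r = pert_m \<rho>0 p0 d\<rho>c r \<and>
            \<rho> r = pert_rho \<rho>0 p0 d\<rho>c r \<and>
            p r = pert_p \<rho>0 p0 d\<rho>c r))"
proof -
  interpret T: tov \<rho>0 p0 R using sol0 pos by unfold_locales
  show ?thesis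
  proof (rule conjI, goal_cases)
    case 1
    show ?case
    proof (intro allI impI)
    fix d\<rho>c :: real and R' :: ereal
    assume R': "R' \<le> R"
      and hm: "\<forall>r\<in>Icr R'. r > 0 \<longrightarrow> 1 - 2 * pert_m \<rho>0 p0 d\<rho>c r / r > 0"
    have sub: "Icr R' \<subseteq> Icr R" by (rule Icr_mono[OF R'])
    have massI: "\<forall>r\<in>Icr R'. mass (pert_rho \<rho>0 p0 d\<rho>c) r = pert_m \<rho>0 p0 d\<rho>c r"
      using T.mass_prho sub by blast
    have gI: "\<forall>r\<in>Icr R'. gfun (pert_m \<rho>0 p0 d\<rho>c) (pert_p \<rho>0 p0 d\<rho>c) r = gfun (mass \<rho>0) p0 r"
    proof
      fix r assume r: "r \<in> Icr R'"
      show "gfun (pert_m \<rho>0 p0 d\<rho>c) (pert_p \<rho>0 p0 d\<rho>c) r = gfun (mass \<rho>0) p0 r"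
        using T.gfun_pert[of r d\<rho>c] r sub hm by (auto simp: T.g0_def)
    qed
    have tov: "TOV_regular R' (pert_rho \<rho>0 p0 d\<rho>c) (pert_p \<rho>0 p0 d\<rho>c)"
      unfolding TOV_regular_def
    proof (intro conjI ballI impI)
      show "continuous_on (Icr R') (pert_rho \<rho>0 p0 d\<rho>c)"
        by (rule continuous_on_subset[OF T.prho_cont sub])
      show "continuous_on (Icr R') (pert_p \<rho>0 p0 d\<rho>c)"
        by (rule continuous_on_subset[OF T.pp_cont sub])
    next
      fix r assume r: "r \<in> Icr R'" and r0: "r > 0"
      have m: "mass (pert_rho \<rho>0 p0 d\<rho>c) r = pert_m \<rho>0 p0 d\<rho>c r" using massI r by blast
      show "1 - 2 * mass (pert_rho \<rho>0 p0 d\<rho>c) r / r > 0" using m hm r r0 by simp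
      have rP: "r \<in> PP R" using r sub r0 PP_Icr by blast
      have "gfun (mass (pert_rho \<rho>0 p0 d\<rho>c)) (pert_p \<rho>0 p0 d\<rho>c) r
          = gfun (pert_m \<rho>0 p0 d\<rho>c) (pert_p \<rho>0 p0 d\<rho>c) r"
        by (simp add: gfun_def m)
      also have "\<dots> = T.g0 r" using gI r by (simp add: T.g0_def)
      finally show "(pert_p \<rho>0 p0 d\<rho>c has_real_derivative
          - (pert_rho \<rho>0 p0 d\<rho>c r + pert_p \<rho>0 p0 d\<rho>c r) *
            gfun (mass (pert_rho \<rho>0 p0 d\<rho>c)) (pert_p \<rho>0 p0 d\<rho>c) r) (at r)"
        using T.pp_deriv[OF rP, of d\<rho>c] by simp
    qed
    have dpI: "\<forall>r\<in>Icr R'. dp \<rho>0 p0 d\<rho>c r =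
            (- d\<rho>c / 3) / (1 + r * gfun (mass \<rho>0) p0 r)^2
            * (1 + 8 * pi * p0 r * r^2) / (1 - 2 * mass \<rho>0 r / r) * Phi \<rho>0 p0 r"
      using T.dp_formula sub by blast
    show "TOV_regular R' (pert_rho \<rho>0 p0 d\<rho>c) (pert_p \<rho>0 p0 d\<rho>c) \<and>
        (\<forall>r\<in>Icr R'. mass (pert_rho \<rho>0 p0 d\<rho>c) r = pert_m \<rho>0 p0 d\<rho>c r) \<and>
        (\<forall>r\<in>Icr R'. gfun (pert_m \<rho>0 p0 d\<rho>c) (pert_p \<rho>0 p0 d\<rho>c) r = gfun (mass \<rho>0) p0 r) \<and>
        pert_rho \<rho>0 p0 d\<rho>c 0 = \<rho>0 0 + d\<rho>c \<and>
        pert_p \<rho>0 p0 d\<rho>c 0 = p0 0 + (- d\<rho>c / 3) \<and>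
        (\<forall>r\<in>Icr R'. dp \<rho>0 p0 d\<rho>c r =
            (- d\<rho>c / 3) / (1 + r * gfun (mass \<rho>0) p0 r)^2
            * (1 + 8 * pi * p0 r * r^2) / (1 - 2 * mass \<rho>0 r / r) * Phi \<rho>0 p0 r)"
      using tov massI gI dpI by (simp add: pert_rho_def pert_p_def dp_def)
    qed
  next
    case 2
    show ?case
    proof (intro allI impI)
    fix \<rho> p :: "real \<Rightarrow> real" and R' :: ereal
    assume "R' \<le> R" "TOV_regular R' \<rho> p" "\<forall>r\<in>Icr R'. gfun (mass \<rho>) p r = gfun (mass \<rho>0) p0 r"
    then show "\<exists>d\<rho>c::real. \<forall>r\<in>Icr R'.
            mass \<rho> r = pert_m \<rho>0 p0 d\<rho>c r \<and>
            \<rho> r = pert_rho \<rho>0 p0 d\<rho>c r \<and>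
            p r = pert_p \<rho>0 p0 d\<rho>c r"
      using T.converse[of R' \<rho> p] by (simp add: T.g0_def)
    qed
  qed
qed

end
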